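(* For generic $x_0,x_1,\dots,x_L$, the six-vertex partition function with domain-wall boundaries satisfies, for every $0\le l\le L$, \[ \sum_{i=0}^L\sigma_i^{(l)}\,Z(X_i^0)=0, \] where $X_0^0:=X$ and \[ \sigma_i^{(l)}=\begin{cases}\dfrac{c(x_0-x_l)}{b(x_0-x_l)}\displaystyle\prod_{k=1}^La(x_0-\mu_k)\prod_{\substack{k=1\\k\ne l}}^L\frac{a(x_k-x_0)}{b(x_k-x_0)} & i=0,\ l\ne0,\\[2ex] \displaystyle\prod_{k=1}^Lb(x_l-\mu_k)-\prod_{k=1}^La(x_l-\mu_k)\prod_{\substack{k=0\\k\ne l}}^L\frac{a(x_k-x_l)}{b(x_k-x_l)} & i=l,\\[2ex] \dfrac{c(x_i-x_l)}{b(x_i-x_l)}\displaystyle\prod_{k=1}^La(x_i-\mu_k)\prod_{\substack{k=0\\k\ne i,l}}^L\frac{a(x_k-x_i)}{b(x_k-x_i)} & \text{otherwise.}\end{cases} \]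
   Context: Six-vertex setup. Fix $\gamma\in\mathbb C$, $L\ge1$ and $\mu_1,\dots,\mu_L\in\mathbb C$. Let $a(x)=\sinh(x+\gamma)$, $b(x)=\sinh x$, $c(x)=\sinh\gamma$ (constant). With $v_1,v_2$ the standard basis of $\mathbb C^2$, let $R(x)$ be the matrix on $\mathbb C^2\otimes\mathbb C^2$ which in the ordered basis $v_1\otimes v_1,v_1\otimes v_2,v_2\otimes v_1,v_2\otimes v_2$ is $\begin{pmatrix}a(x)&0&0&0\\0&b(x)&c(x)&0\\0&c(x)&b(x)&0\\0&0&0&a(x)\end{pmatrix}$. On $\mathbb C^2_0\otimes(\mathbb C^2)^{\otimes L}$, let $T_0(x)=R_{01}(x-\mu_1)R_{02}(x-\mu_2)\cdots R_{0L}(x-\mu_L)$ (with $R_{0i}$ acting on the auxiliary factor $0$ and quantum factor $i$), written in the auxiliary space as $\begin{pmatrix}A(x)&B(x)\\C(x)&D(x)\end{pmatrix}$. With $|0\rangle=v_1^{\otimes L}$ and $\langle\bar0|=(v_2^* )^{\otimes L}$, the partition function of the six-vertex model with domain-wall boundaries is $Z(x_1,\dots,x_L)=\langle\bar0|B(x_1)B(x_2)\cdots B(x_L)|0\rangle$. Notation: $X=(x_1,\dots,x_L)$; for $1\le i\le L$, $X_i^0$ is $X$ with $x_i$ replaced by $x_0$. *)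

theory Defs
  imports Complex_Main
begin

definition wa :: "complex \<Rightarrow> complex \<Rightarrow> complex" where
  "wa \<gamma> x = sinh (x + \<gamma>)"
definition wb :: "complex \<Rightarrow> complex" where
  "wb x = sinh x"
definition wc :: "complex \<Rightarrow> complex \<Rightarrow> complex" where
  "wc \<gamma> x = sinh \<gamma>"

text \<open>Basis of C^2: False stands for v1, True stands for v2.
  Rmat g x i' j' i j is the matrix entry of R(x) with row v_i' (x) v_j'
  and column v_i (x) v_j, the first factor being the auxiliary space.\<close>
definition Rmat :: "complex \<Rightarrow> complex \<Rightarrow> bool \<Rightarrow> bool \<Rightarrow> bool \<Rightarrow> bool \<Rightarrow> complex" where
  "Rmat g x i' j' i j =
     (if i' = i \<and> j' = j then (if i = j then wa g x else wb x)
      else if i' = j \<and> j' = i then wc g x else 0)"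

text \<open>Matrix entries of the monodromy matrix
  T_0(x) = R_01(x-mu_1) R_02(x-mu_2) ... R_0L(x-mu_L):
  mono g x mus a' a s' s is the entry with auxiliary row a', auxiliary column a,
  quantum row state s' and quantum column state s (lists of basis labels).\<close>
fun mono :: "complex \<Rightarrow> complex \<Rightarrow> complex list \<Rightarrow> bool \<Rightarrow> bool \<Rightarrow> bool list \<Rightarrow> bool list \<Rightarrow> complex" where
  "mono g x [] a' a [] [] = (if a' = a then 1 else 0)"
| "mono g x (m # ms) a' a (t' # ts') (t # ts) =
     (\<Sum>c\<in>(UNIV::bool set). Rmat g (x - m) a' t' c t * mono g x ms c a ts' ts)"
| "mono g x _ a' a _ _ = 0"

text \<open>Entries of B(x) = upper right block (row v1, column v2) of T_0(x).\<close>
definition Bop :: "complex \<Rightarrow> complex list \<Rightarrow> complex \<Rightarrow> bool list \<Rightarrow> bool list \<Rightarrow> complex" where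
  "Bop g mus x s' s = mono g x mus False True s' s"

definition states :: "nat \<Rightarrow> bool list set" where
  "states L = {s. length s = L}"

fun Bprod :: "complex \<Rightarrow> complex list \<Rightarrow> complex list \<Rightarrow> bool list \<Rightarrow> bool list \<Rightarrow> complex" where
  "Bprod g mus [] s' s = (if s' = s then 1 else 0)"
| "Bprod g mus (x # xs) s' s =
     (\<Sum>u\<in>states (length mus). Bop g mus x s' u * Bprod g mus xs u s)"

text \<open>Partition function Z(x_1..x_L) = <0bar| B(x_1) ... B(x_L) |0>,
  with |0> = v1^{(x) L} and <0bar| = (v2^* )^{(x) L}; inhomogeneities mu_1..mu_L.\<close>
definition Zpf :: "complex \<Rightarrow> nat \<Rightarrow> (nat \<Rightarrow> complex) \<Rightarrow> complex list \<Rightarrow> complex" where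
  "Zpf g L mu xs = Bprod g (map mu [1..<L+1]) xs (replicate L True) (replicate L False)"

text \<open>Z(X_i^0): the argument list (x_1..x_L) with x_i replaced by x_0 (for i = 0 it is X).\<close>
definition ZX :: "complex \<Rightarrow> nat \<Rightarrow> (nat \<Rightarrow> complex) \<Rightarrow> (nat \<Rightarrow> complex) \<Rightarrow> nat \<Rightarrow> complex" where
  "ZX g L mu x i = Zpf g L mu (map (\<lambda>k. if k = i then x 0 else x k) [1..<L+1])"

definition sigma :: "complex \<Rightarrow> nat \<Rightarrow> (nat \<Rightarrow> complex) \<Rightarrow> (nat \<Rightarrow> complex) \<Rightarrow> nat \<Rightarrow> nat \<Rightarrow> complex" where
  "sigma g L mu x l i =
    (if i = 0 \<and> l \<noteq> 0 then
       wc g (x 0 - x l) / wb (x 0 - x l) * (\<Prod>k=1..L. wa g (x 0 - mu k))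
         * (\<Prod>k\<in>{1..L} - {l}. wa g (x k - x 0) / wb (x k - x 0))
     else if i = l then
       (\<Prod>k=1..L. wb (x l - mu k))
         - (\<Prod>k=1..L. wa g (x l - mu k)) * (\<Prod>k\<in>{0..L} - {l}. wa g (x k - x l) / wb (x k - x l))
     else
       wc g (x i - x l) / wb (x i - x l) * (\<Prod>k=1..L. wa g (x i - mu k))
         * (\<Prod>k\<in>{0..L} - {i, l}. wa g (x k - x i) / wb (x k - x i)))"

end

theory Submission
  imports Defs
begin


lemma sum_bool: "(\<Sum>c\<in>(UNIV::bool set). f c) = f False + f True"
  by (simp add: UNIV_bool)

lemma sinh_exp: "sinh (z::complex) = (exp z - inverse (exp z)) / 2"
  by (simp add: sinh_field_def exp_minus)

lemma ybe:
  "(\<Sum>c\<in>UNIV. \<Sum>d\<in>UNIV. \<Sum>v\<in>UNIV. Rmat g (x-y) a b c d * Rmat g (x-m) c t' c1 v * Rmat g (y-m) d v d1 t)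
 = (\<Sum>p\<in>UNIV. \<Sum>q\<in>UNIV. \<Sum>w\<in>UNIV. Rmat g (y-m) b t' q w * Rmat g (x-m) a w p t * Rmat g (x-y) p q c1 d1)"
  apply (simp add: sum_bool Rmat_def)
  apply (cases a; cases b; cases t'; cases c1; cases d1; cases t; simp)
  apply (simp_all add: wa_def wb_def wc_def sinh_exp exp_diff exp_add field_simps)

  done

lemma states_0: "states 0 = {[]}" by (auto simp: states_def)

lemma states_Suc: "states (Suc n) = (\<lambda>(v,vs). v#vs) ` (UNIV \<times> states n)"
  by (auto simp: states_def image_iff length_Suc_conv)

lemma finite_states: "finite (states n)"
proof (induction n)
  case 0 then show ?case by (simp add: states_0)
next
  case (Suc n) then show ?case by (simp add: states_Suc)
qed

lemma sum_states_Suc: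
  "(\<Sum>u\<in>states (Suc n). h u) = (\<Sum>v\<in>UNIV. \<Sum>vs\<in>states n. h (v#vs))"
proof -
  have inj: "inj_on (\<lambda>(v,vs). v#vs) (UNIV \<times> states n)" by (auto simp: inj_on_def)
  have "(\<Sum>u\<in>states (Suc n). h u) = (\<Sum>p\<in>UNIV \<times> states n. h (fst p # snd p))"
    unfolding states_Suc by (subst sum.reindex[OF inj]) (simp add: case_prod_beta)
  also have "\<dots> = (\<Sum>v\<in>UNIV. \<Sum>vs\<in>states n. h (v#vs))"
    by (subst sum.cartesian_product) (simp add: case_prod_beta)
  finally show ?thesis .
qed

lemma mono_len0: "length s' \<noteq> length ms \<or> length s \<noteq> length ms \<Longrightarrow> mono g x ms a' a s' s = 0"
  by (induction g x ms a' a s' s rule: mono.induct) auto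

definition DM where
  "DM g x y ms c e d f s' s = (\<Sum>u\<in>states (length ms). mono g x ms c e s' u * mono g y ms d f u s)"
definition DM2 where
  "DM2 g x y ms a c b d s' s = (\<Sum>u\<in>states (length ms). mono g y ms b d s' u * mono g x ms a c u s)"

lemma DM_Cons:
  "DM g x y (m#ms) c e d f (t'#ts') (t#ts) =
   (\<Sum>v\<in>UNIV. \<Sum>c1\<in>UNIV. \<Sum>d1\<in>UNIV. Rmat g (x-m) c t' c1 v * Rmat g (y-m) d v d1 t * DM g x y ms c1 e d1 f ts' ts)"
proof -
  let ?S = "states (length ms)"
  have "DM g x y (m#ms) c e d f (t'#ts') (t#ts) =
    (\<Sum>v\<in>UNIV. \<Sum>vs\<in>?S. \<Sum>c1\<in>UNIV. \<Sum>d1\<in>UNIV. Rmat g (x-m) c t' c1 v * Rmat g (y-m) d v d1 t *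
       (mono g x ms c1 e ts' vs * mono g y ms d1 f vs ts))"
    unfolding DM_def by (simp only: length_Cons sum_states_Suc mono.simps sum_product) (simp add: ac_simps)
  also have "\<dots> = (\<Sum>v\<in>UNIV. \<Sum>c1\<in>UNIV. \<Sum>vs\<in>?S. \<Sum>d1\<in>UNIV. Rmat g (x-m) c t' c1 v * Rmat g (y-m) d v d1 t *
       (mono g x ms c1 e ts' vs * mono g y ms d1 f vs ts))"
    by (rule sum.cong[OF refl], rule sum.swap)
  also have "\<dots> = (\<Sum>v\<in>UNIV. \<Sum>c1\<in>UNIV. \<Sum>d1\<in>UNIV. \<Sum>vs\<in>?S. Rmat g (x-m) c t' c1 v * Rmat g (y-m) d v d1 t *
       (mono g x ms c1 e ts' vs * mono g y ms d1 f vs ts))"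
    by (rule sum.cong[OF refl], rule sum.cong[OF refl], rule sum.swap)
  also have "\<dots> = (\<Sum>v\<in>UNIV. \<Sum>c1\<in>UNIV. \<Sum>d1\<in>UNIV. Rmat g (x-m) c t' c1 v * Rmat g (y-m) d v d1 t * DM g x y ms c1 e d1 f ts' ts)"
    unfolding DM_def by (simp add: sum_distrib_left)
  finally show ?thesis .
qed

lemma DM2_Cons:
  "DM2 g x y (m#ms) a c b d (t'#ts') (t#ts) =
   (\<Sum>v\<in>UNIV. \<Sum>b1\<in>UNIV. \<Sum>a1\<in>UNIV. Rmat g (y-m) b t' b1 v * Rmat g (x-m) a v a1 t * DM2 g x y ms a1 c b1 d ts' ts)"
proof -
  let ?S = "states (length ms)"
  have "DM2 g x y (m#ms) a c b d (t'#ts') (t#ts) =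
    (\<Sum>v\<in>UNIV. \<Sum>vs\<in>?S. \<Sum>b1\<in>UNIV. \<Sum>a1\<in>UNIV. Rmat g (y-m) b t' b1 v * Rmat g (x-m) a v a1 t *
       (mono g y ms b1 d ts' vs * mono g x ms a1 c vs ts))"
    unfolding DM2_def by (simp only: length_Cons sum_states_Suc mono.simps sum_product) (simp add: ac_simps)
  also have "\<dots> = (\<Sum>v\<in>UNIV. \<Sum>b1\<in>UNIV. \<Sum>vs\<in>?S. \<Sum>a1\<in>UNIV. Rmat g (y-m) b t' b1 v * Rmat g (x-m) a v a1 t *
       (mono g y ms b1 d ts' vs * mono g x ms a1 c vs ts))"
    by (rule sum.cong[OF refl], rule sum.swap)
  also have "\<dots> = (\<Sum>v\<in>UNIV. \<Sum>b1\<in>UNIV. \<Sum>a1\<in>UNIV. \<Sum>vs\<in>?S. Rmat g (y-m) b t' b1 v * Rmat g (x-m) a v a1 t *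
       (mono g y ms b1 d ts' vs * mono g x ms a1 c vs ts))"
    by (rule sum.cong[OF refl], rule sum.cong[OF refl], rule sum.swap)
  also have "\<dots> = (\<Sum>v\<in>UNIV. \<Sum>b1\<in>UNIV. \<Sum>a1\<in>UNIV. Rmat g (y-m) b t' b1 v * Rmat g (x-m) a v a1 t * DM2 g x y ms a1 c b1 d ts' ts)"
    unfolding DM2_def by (simp add: sum_distrib_left)
  finally show ?thesis .
qed

lemma rtt:
  "(\<Sum>c\<in>UNIV. \<Sum>d\<in>UNIV. Rmat g (x-y) a b c d * DM g x y ms c e d f s' s)
 = (\<Sum>c\<in>UNIV. \<Sum>d\<in>UNIV. DM2 g x y ms a c b d s' s * Rmat g (x-y) c d e f)"
proof (induction ms arbitrary: a b s' s)
  case Nil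
  show ?case
    by (cases s'; cases s; cases a; cases b; cases e; cases f)
       (simp_all add: DM_def DM2_def states_0 sum_bool Rmat_def)
next
  case (Cons m ms)
  show ?case
  proof (cases s')
    case Nil then show ?thesis by (simp add: DM_def DM2_def)
  next
    case (Cons t' ts')
    show ?thesis
    proof (cases s)
      case Nil then show ?thesis by (simp add: DM_def DM2_def)
    next
      case (Cons t ts)
      let ?R = "Rmat g"
      have "(\<Sum>c\<in>UNIV. \<Sum>d\<in>UNIV. ?R (x-y) a b c d * DM g x y (m#ms) c e d f s' s)
        = (\<Sum>c1\<in>UNIV. \<Sum>d1\<in>UNIV. (\<Sum>c\<in>UNIV. \<Sum>d\<in>UNIV. \<Sum>v\<in>UNIV. ?R (x-y) a b c d * ?R (x-m) c t' c1 v * ?R (y-m) d v d1 t) * DM g x y ms c1 e d1 f ts' ts)"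
        using \<open>s' = t'#ts'\<close> \<open>s = t#ts\<close> by (simp add: DM_Cons sum_bool algebra_simps)
      also have "\<dots> = (\<Sum>c1\<in>UNIV. \<Sum>d1\<in>UNIV. (\<Sum>p\<in>UNIV. \<Sum>q\<in>UNIV. \<Sum>w\<in>UNIV. ?R (y-m) b t' q w * ?R (x-m) a w p t * ?R (x-y) p q c1 d1) * DM g x y ms c1 e d1 f ts' ts)"
        by (simp only: ybe)
      also have "\<dots> = (\<Sum>p\<in>UNIV. \<Sum>q\<in>UNIV. \<Sum>w\<in>UNIV. ?R (y-m) b t' q w * ?R (x-m) a w p t * (\<Sum>c1\<in>UNIV. \<Sum>d1\<in>UNIV. ?R (x-y) p q c1 d1 * DM g x y ms c1 e d1 f ts' ts))"
        by (simp add: sum_bool algebra_simps)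
      also have "\<dots> = (\<Sum>p\<in>UNIV. \<Sum>q\<in>UNIV. \<Sum>w\<in>UNIV. ?R (y-m) b t' q w * ?R (x-m) a w p t * (\<Sum>c\<in>UNIV. \<Sum>d\<in>UNIV. DM2 g x y ms p c q d ts' ts * ?R (x-y) c d e f))"
        by (simp only: Cons.IH)
      also have "\<dots> = (\<Sum>c\<in>UNIV. \<Sum>d\<in>UNIV. DM2 g x y (m#ms) a c b d s' s * ?R (x-y) c d e f)"
        using \<open>s' = t'#ts'\<close> \<open>s = t#ts\<close> by (simp add: DM2_Cons sum_bool algebra_simps)
      finally show ?thesis .
    qed
  qed
qed

lemma C_vac: "mono g x ms True False s' (replicate (length ms) False) = 0"
proof (induction ms arbitrary: s')
  case Nil then show ?case by (cases s') auto
next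
  case (Cons m ms) then show ?case by (cases s') (auto simp: sum_bool Rmat_def)
qed

lemma A_vac: "mono g x ms False False s' (replicate (length ms) False) =
   (if s' = replicate (length ms) False then prod_list (map (\<lambda>m. wa g (x-m)) ms) else 0)"
proof (induction ms arbitrary: s')
  case Nil then show ?case by (cases s') auto
next
  case (Cons m ms) then show ?case by (cases s') (auto simp: sum_bool Rmat_def C_vac)
qed

lemma C_dvac: "mono g x ms True False (replicate (length ms) True) s = 0"
proof (induction ms arbitrary: s)
  case Nil then show ?case by (cases s) auto
next
  case (Cons m ms) then show ?case by (cases s) (auto simp: sum_bool Rmat_def)
qed

lemma A_dvac: "mono g x ms False False (replicate (length ms) True) s =
   (if s = replicate (length ms) True then prod_list (map (\<lambda>m. wb (x-m)) ms) else 0)"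
proof (induction ms arbitrary: s)
  case Nil then show ?case by (cases s) auto
next
  case (Cons m ms) then show ?case by (cases s) (auto simp: sum_bool Rmat_def C_dvac)
qed

definition Aop where "Aop g ms x s' s = mono g x ms False False s' s"

lemma AB_raw:
  "wb (x-y) * (\<Sum>u\<in>states (length ms). Aop g ms y s' u * Bop g ms x u s)
   = wa g (x-y) * (\<Sum>u\<in>states (length ms). Bop g ms x s' u * Aop g ms y u s)
   - wc g (x-y) * (\<Sum>u\<in>states (length ms). Bop g ms y s' u * Aop g ms x u s)"
  using rtt[of g x y False False ms True False s' s]
  by (simp add: sum_bool Rmat_def DM_def DM2_def Aop_def Bop_def algebra_simps)

lemma BB_raw:
  "wa g (x-y) * (\<Sum>u\<in>states (length ms). Bop g ms x s' u * Bop g ms y u s)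
   = wa g (x-y) * (\<Sum>u\<in>states (length ms). Bop g ms y s' u * Bop g ms x u s)"
  using rtt[of g x y False False ms True True s' s]
  by (simp add: sum_bool Rmat_def DM_def DM2_def Aop_def Bop_def algebra_simps)

lemma isCont_Rmat: "isCont (\<lambda>x. Rmat g (x-m) i' j' i j) z"
  by (cases i'; cases j'; cases i; cases j) (simp_all add: Rmat_def wa_def wb_def wc_def continuous_intros)

lemma isCont_mono: "isCont (\<lambda>x. mono g x ms a' a s' s) z"
proof (induction ms arbitrary: a' s' s)
  case Nil then show ?case by (cases s'; cases s) auto
next
  case (Cons m ms)
  show ?case
  proof (cases s')
    case Nil then show ?thesis by simp
  next
    case (Cons t' ts')
    then show ?thesis
    proof (cases s)
      case Nil then show ?thesis using Cons by simp
    next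
      case (Cons t ts)
      show ?thesis using \<open>s' = t'#ts'\<close> Cons
        by (simp add: sum_bool) (intro continuous_intros isCont_Rmat Cons.IH)
    qed
  qed
qed


lemma exp_real_sq_one: "exp (complex_of_real r) ^ 2 = 1 \<Longrightarrow> r = 0"
proof -
  assume "exp (complex_of_real r) ^ 2 = 1"
  then have "complex_of_real (exp r ^ 2) = 1" by (simp only: exp_of_real of_real_power)
  then have h: "exp r ^ 2 = 1" using of_real_eq_1_iff by blast
  have "(exp r - 1) * (exp r + 1) = 0" using h by (simp add: algebra_simps power2_eq_square)
  moreover have "exp r + 1 \<noteq> 0" using exp_gt_zero[of r] by linarith
  ultimately have "exp r = 1" by simp
  then show "r = 0" by simp
qed

lemma sinh_zero_sq: "sinh (w::complex) = 0 \<Longrightarrow> exp w ^ 2 = 1"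
  using sinh_zero_iff[of w] by auto

lemma dens:
  fixes F :: "complex \<Rightarrow> complex"
  assumes cont: "isCont F z" and zero: "\<And>w. sinh (w + c) \<noteq> 0 \<Longrightarrow> F w = 0"
  shows "F z = 0"
proof -
  define t where "t n = z + complex_of_real (inverse (real (Suc n)))" for n
  have "(\<lambda>n. complex_of_real (inverse (real (Suc n)))) \<longlonglongrightarrow> complex_of_real 0"
    by (intro tendsto_of_real LIMSEQ_inverse_real_of_nat)
  then have tl: "t \<longlonglongrightarrow> z" unfolding t_def using tendsto_add[OF tendsto_const[of z]] by force
  have lim: "(\<lambda>n. F (t n)) \<longlonglongrightarrow> F z" using isCont_tendsto_compose[OF cont tl] .
  have uniq: "n1 = n2" if "sinh (t n1 + c) = 0" "sinh (t n2 + c) = 0" for n1 n2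
  proof -
    define r where "r = inverse (real (Suc n1)) - inverse (real (Suc n2))"
    have e1: "exp (t n1 + c) ^ 2 = 1" and e2: "exp (t n2 + c) ^ 2 = 1" using that sinh_zero_sq by auto
    have "t n1 + c = (t n2 + c) + complex_of_real r" unfolding t_def r_def by simp
    then have "exp (t n1 + c) = exp (t n2 + c) * exp (complex_of_real r)" by (simp only: exp_add)
    then have "exp (t n1 + c) ^ 2 = exp (t n2 + c) ^ 2 * exp (complex_of_real r) ^ 2" by (simp add: power_mult_distrib)
    then have "exp (complex_of_real r) ^ 2 = 1" using e1 e2 by simp
    then have "r = 0" by (rule exp_real_sq_one)
    then show ?thesis unfolding r_def by simp
  qed
  have ev: "eventually (\<lambda>n. F (t n) = 0) sequentially"
  proof (cases "\<exists>n0. sinh (t n0 + c) = 0")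
    case True
    then obtain n0 where n0: "sinh (t n0 + c) = 0" by blast
    have "F (t n) = 0" if "n \<ge> Suc n0" for n
    proof -
      have "n \<noteq> n0" using that by simp
      then have "sinh (t n + c) \<noteq> 0" using uniq n0 by blast
      then show ?thesis by (rule zero)
    qed
    then show ?thesis unfolding eventually_sequentially by blast
  next
    case False then show ?thesis using zero by auto
  qed
  then have "(\<lambda>n. F (t n)) \<longlonglongrightarrow> 0"
    by (rule tendsto_eventually)
  then show ?thesis using lim LIMSEQ_unique by blast
qed

lemma BB_comm:
  "(\<Sum>u\<in>states (length ms). Bop g ms x s' u * Bop g ms y u s)
   = (\<Sum>u\<in>states (length ms). Bop g ms y s' u * Bop g ms x u s)"
proof -
  let ?F = "\<lambda>x. (\<Sum>u\<in>states (length ms). Bop g ms x s' u * Bop g ms y u s)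
   - (\<Sum>u\<in>states (length ms). Bop g ms y s' u * Bop g ms x u s)"
  have "isCont ?F x" unfolding Bop_def by (intro continuous_intros isCont_mono)
  moreover have "?F w = 0" if "sinh (w + (g - y)) \<noteq> 0" for w
  proof -
    have "wa g (w - y) \<noteq> 0" using that by (simp add: wa_def algebra_simps)
    then show ?thesis using BB_raw[of g w y ms s' s] by simp
  qed
  ultimately have "?F x = 0" by (rule dens)
  then show ?thesis by simp
qed



lemma Bprod_swap: "Bprod g mus (x#y#zs) s' s = Bprod g mus (y#x#zs) s' s"
proof -
  let ?S = "states (length mus)"
  have "Bprod g mus (x#y#zs) s' s = (\<Sum>w\<in>?S. (\<Sum>u\<in>?S. Bop g mus x s' u * Bop g mus y u w) * Bprod g mus zs w s)"
    by (simp add: sum_distrib_left sum_distrib_right mult.assoc) (rule sum.swap)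
  also have "\<dots> = (\<Sum>w\<in>?S. (\<Sum>u\<in>?S. Bop g mus y s' u * Bop g mus x u w) * Bprod g mus zs w s)"
    by (simp only: BB_comm)
  also have "\<dots> = Bprod g mus (y#x#zs) s' s"
    by (simp add: sum_distrib_left sum_distrib_right mult.assoc) (rule sum.swap)
  finally show ?thesis .
qed

lemma Bprod_cons_cong: "Bprod g mus xs = Bprod g mus ys \<Longrightarrow> Bprod g mus (x#xs) = Bprod g mus (x#ys)"
  by (rule ext)+ simp

lemma Bprod_move: "Bprod g mus (ys1 @ x # ys2) = Bprod g mus (x # ys1 @ ys2)"
proof (induction ys1)
  case Nil then show ?case by simp
next
  case (Cons y ys1)
  have "Bprod g mus (y # ys1 @ x # ys2) = Bprod g mus (y # x # ys1 @ ys2)"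
    using Cons.IH by (rule Bprod_cons_cong)
  also have "\<dots> = Bprod g mus (x # y # ys1 @ ys2)" by (intro ext Bprod_swap)
  finally show ?case by simp
qed

lemma Bprod_perm: "(\<And>z. count_list xs z = count_list ys z) \<Longrightarrow> Bprod g mus xs = Bprod g mus ys"
proof (induction xs arbitrary: ys)
  case Nil
  have "ys = []"
  proof (cases ys)
    case (Cons y ys') then show ?thesis using Nil.prems[of y] by simp
  qed simp
  then show ?case by simp
next
  case (Cons x xs)
  have "count_list ys x > 0" using Cons.prems[of x] by simp
  then have "x \<in> set ys" by (metis count_list_0_iff less_numeral_extra(3))
  then obtain ys1 ys2 where ys: "ys = ys1 @ x # ys2" by (meson split_list)
  then have "count_list xs z = count_list (ys1 @ ys2) z" for z using Cons.prems[of z] by (auto split: if_splits)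
  then have "Bprod g mus (x#xs) = Bprod g mus (x # ys1 @ ys2)" using Cons.IH Bprod_cons_cong by blast
  then show ?case using ys Bprod_move by simp
qed

definition fw where "fw g u = wa g u / wb u"
definition hw where "hw g u = wc g u / wb u"
definition Lam where "Lam g mus x = prod_list (map (\<lambda>m. wa g (x - m)) mus)"
definition Mc where "Mc g mus xz xs i = - hw g (xs!i - xz) * Lam g mus (xs!i) *
   (\<Prod>k<length xs. if k = i then 1 else fw g (xs!k - xs!i))"

lemma sinh_pure: "wa g u * wb (u - v) + wc g u * wb v = wa g (u - v) * wb u"
proof -
  have h: "cosh u ^ 2 = sinh u ^ 2 + 1" by (rule cosh_square_eq)
  show ?thesis
  unfolding wa_def wb_def wc_def sinh_add sinh_diff cosh_add cosh_diff
  using h by algebra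
qed

lemma coef_id:
  assumes "wb (xw - xz) \<noteq> 0" "wb (z - xz) \<noteq> 0" "wb (z - xw) \<noteq> 0"
  shows "fw g (xw - xz) * hw g (z - xz) - hw g (xw - xz) * hw g (z - xw) = hw g (z - xz) * fw g (xw - z)"
proof -
  have m: "wb (z - xw) = - wb (xw - z)" by (simp add: wb_def sinh_minus[symmetric])
  have n3: "wb (xw - z) \<noteq> 0" using assms(3) m by simp
  have id: "wa g (xw-xz) * wb (xw - z) + sinh g * wb (z-xz) = wa g (xw - z) * wb (xw-xz)"
    using sinh_pure[of g "xw-xz" "z-xz"] by (simp add: wc_def)
  define A where "A = wa g (xw-xz)"
  define B where "B = wa g (xw-z)"
  define P where "P = wb (xw-xz)"
  define Q where "Q = wb (z-xz)"
  define R where "R = wb (xw-z)"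
  define c where "c = sinh g"
  have id': "A * R + c * Q = B * P" using id unfolding A_def B_def P_def Q_def R_def c_def .
  have "P \<noteq> 0" "Q \<noteq> 0" "R \<noteq> 0" using assms n3 unfolding P_def Q_def R_def by auto
  then have "A / P * (c / Q) - c / P * (c / (- R)) = c*(A*R + c*Q)/(P*Q*R)"
    by (simp add: field_simps)
  also have "\<dots> = c*(B*P)/(P*Q*R)" by (simp only: id')
  also have "\<dots> = c / Q * (B / R)" using \<open>P \<noteq> 0\<close> by simp
  finally have "A / P * (c / Q) - c / P * (c / (- R)) = c / Q * (B / R)" .
  then show ?thesis unfolding fw_def hw_def m A_def B_def P_def Q_def R_def c_def wc_def .
qed

lemma Bmul:
  "(\<Sum>u\<in>states (length mus). Bop g mus y s' u * (\<alpha> * Bprod g mus ys u z + (\<Sum>i<n. \<beta> i * Bprod g mus (zs i) u z)))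
   = \<alpha> * Bprod g mus (y#ys) s' z + (\<Sum>i<n. \<beta> i * Bprod g mus (y # zs i) s' z)"
  by (simp add: distrib_left sum.distrib sum_distrib_left algebra_simps) (rule sum.swap)

lemma Mc_0: "Mc g mus xz (xw#xs) 0 = - hw g (xw - xz) * Lam g mus xw * (\<Prod>k<length xs. fw g (xs!k - xw))"
  unfolding Mc_def by (simp add: prod.lessThan_Suc_shift del: prod.lessThan_Suc)

lemma Mc_Suc:
  assumes "i < length xs" "wb (xw - xz) \<noteq> 0" "wb (xs!i - xz) \<noteq> 0" "wb (xs!i - xw) \<noteq> 0"
  shows "Mc g mus xz (xw#xs) (Suc i) = fw g (xw - xz) * Mc g mus xz xs i - hw g (xw - xz) * Mc g mus xw xs i"
proof -
  define z where "z = xs!i"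
  define Q where "Q = (\<Prod>k<length xs. if k = i then 1 else fw g (xs!k - z))"
  have pq: "(\<Prod>k<length xs. if Suc k = Suc i then 1 else fw g ((xw#xs)!Suc k - (xw#xs)!Suc i)) = Q"
    unfolding Q_def z_def by (rule prod.cong) auto
  have "Mc g mus xz (xw#xs) (Suc i) = - hw g (z - xz) * Lam g mus z *
     ((if 0 = Suc i then 1 else fw g ((xw#xs)!0 - (xw#xs)!Suc i)) * (\<Prod>k<length xs. if Suc k = Suc i then 1 else fw g ((xw#xs)!Suc k - (xw#xs)!Suc i)))"
    unfolding Mc_def z_def by (simp only: prod.lessThan_Suc_shift length_Cons) simp
  also have "\<dots> = - hw g (z - xz) * Lam g mus z * (fw g (xw - z) * Q)"
    by (simp only: pq) (simp add: z_def)
  also have "\<dots> = - Lam g mus z * Q * (hw g (z - xz) * fw g (xw - z))" by (simp add: algebra_simps)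
  also have "\<dots> = - Lam g mus z * Q * (fw g (xw - xz) * hw g (z - xz) - hw g (xw - xz) * hw g (z - xw))"
    using coef_id[of xw xz z g] assms unfolding z_def by simp
  also have "\<dots> = fw g (xw - xz) * Mc g mus xz xs i - hw g (xw - xz) * Mc g mus xw xs i"
    unfolding Mc_def z_def[symmetric] Q_def[symmetric] by (simp add: algebra_simps)
  finally show ?thesis .
qed

lemma count_upd: "i < length xs \<Longrightarrow> count_list (a # xs[i := b]) z = count_list (b # xs[i := a]) z"
  by (simp add: upd_conv_take_nth_drop)

lemma Bprod_Nil_sum:
  "(\<Sum>u\<in>states (length mus). Aop g mus xz s' u * Bprod g mus [] u zz) = (if zz \<in> states (length mus) then Aop g mus xz s' zz else 0)"
  by (simp add: if_distrib[of "\<lambda>v. _ * v"] sum.delta finite_states cong: if_cong)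

lemma A_through:
  fixes xs mus :: "complex list"
  defines "zz \<equiv> replicate (length mus) False"
  assumes gen1: "\<And>i. i < length xs \<Longrightarrow> wb (xs!i - xz) \<noteq> 0"
    and gen2: "\<And>i j. i < length xs \<Longrightarrow> j < length xs \<Longrightarrow> i \<noteq> j \<Longrightarrow> wb (xs!i - xs!j) \<noteq> 0"
  shows "(\<Sum>u\<in>states (length mus). Aop g mus xz s' u * Bprod g mus xs u zz)
    = Lam g mus xz * (\<Prod>k<length xs. fw g (xs!k - xz)) * Bprod g mus xs s' zz
      + (\<Sum>i<length xs. Mc g mus xz xs i * Bprod g mus (xs[i := xz]) s' zz)"
  using gen1 gen2
proof (induction xs arbitrary: xz s')
  case Nil
  have h1: "zz \<in> states (length mus)" unfolding zz_def states_def by simp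
  note h3 = A_vac[where g=g and x=xz and ms=mus and s'=s']
  show ?case
    using h1 h3 by (simp only: Bprod_Nil_sum) (simp add: Aop_def zz_def Lam_def)
next
  case (Cons xw xs)
  let ?S = "states (length mus)"
  let ?V = "\<lambda>ys w. Bprod g mus ys w zz"
  let ?A = "\<lambda>y a b. Aop g mus y a b"
  let ?B = "\<lambda>y a b. Bop g mus y a b"
  have w10: "wb (xw - xz) \<noteq> 0" using Cons.prems(1)[of 0] by simp
  have g1: "wb (xs!i - xz) \<noteq> 0" if "i < length xs" for i using Cons.prems(1)[of "Suc i"] that by simp
  have g1': "wb (xs!i - xw) \<noteq> 0" if "i < length xs" for i using Cons.prems(2)[of "Suc i" 0] that by simp
  have g2: "wb (xs!i - xs!j) \<noteq> 0" if "i < length xs" "j < length xs" "i \<noteq> j" for i j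
    using Cons.prems(2)[of "Suc i" "Suc j"] that by simp
  have IH0: "(\<Sum>u\<in>?S. Aop g mus xz s'' u * Bprod g mus xs u zz) = Lam g mus xz * (\<Prod>k<length xs. fw g (xs!k - xz)) * Bprod g mus xs s'' zz + (\<Sum>i<length xs. Mc g mus xz xs i * Bprod g mus (xs[i := xz]) s'' zz)" for s''
    by (rule Cons.IH) (simp_all add: g1 g2)
  have IH1: "(\<Sum>u\<in>?S. Aop g mus xw s'' u * Bprod g mus xs u zz) = Lam g mus xw * (\<Prod>k<length xs. fw g (xs!k - xw)) * Bprod g mus xs s'' zz + (\<Sum>i<length xs. Mc g mus xw xs i * Bprod g mus (xs[i := xw]) s'' zz)" for s''
    by (rule Cons.IH) (simp_all add: g1' g2)
  have AB: "(\<Sum>u\<in>?S. ?A xz s' u * ?B xw u w) =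
      fw g (xw - xz) * (\<Sum>u\<in>?S. ?B xw s' u * ?A xz u w) - hw g (xw - xz) * (\<Sum>u\<in>?S. ?B xz s' u * ?A xw u w)" for s' w
    using AB_raw[where x=xw and y=xz and ms=mus and g=g and s'=s' and s=w] w10 unfolding fw_def hw_def
    by (simp add: field_simps)
  have L: "(\<Sum>u\<in>?S. ?A xz s' u * ?V (xw#xs) u) = (\<Sum>w\<in>?S. (\<Sum>u\<in>?S. ?A xz s' u * ?B xw u w) * ?V xs w)"
    by (simp add: sum_distrib_left sum_distrib_right mult.assoc) (rule sum.swap)
  also have "\<dots> = fw g (xw - xz) * (\<Sum>u\<in>?S. ?B xw s' u * (\<Sum>w\<in>?S. ?A xz u w * ?V xs w))
     - hw g (xw - xz) * (\<Sum>u\<in>?S. ?B xz s' u * (\<Sum>w\<in>?S. ?A xw u w * ?V xs w))"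
    apply (simp only: AB)
    apply (simp add: sum_distrib_left sum_distrib_right algebra_simps sum_subtractf)
    apply (subst (1) sum.swap) apply (subst (2) sum.swap) apply (rule refl)
    done
  also have "\<dots> = fw g (xw - xz) * (Lam g mus xz * (\<Prod>k<length xs. fw g (xs!k - xz)) * ?V (xw#xs) s'
        + (\<Sum>i<length xs. Mc g mus xz xs i * ?V (xw # xs[i := xz]) s'))
     - hw g (xw - xz) * (Lam g mus xw * (\<Prod>k<length xs. fw g (xs!k - xw)) * ?V (xz#xs) s'
        + (\<Sum>i<length xs. Mc g mus xw xs i * ?V (xz # xs[i := xw]) s'))"
    apply (simp only: IH0)
    apply (simp only: IH1)
    apply (simp only: Bmul)
    done
  finally have L: "(\<Sum>u\<in>?S. ?A xz s' u * ?V (xw#xs) u) = fw g (xw - xz) * (Lam g mus xz * (\<Prod>k<length xs. fw g (xs!k - xz)) * ?V (xw#xs) s'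
        + (\<Sum>i<length xs. Mc g mus xz xs i * ?V (xw # xs[i := xz]) s'))
     - hw g (xw - xz) * (Lam g mus xw * (\<Prod>k<length xs. fw g (xs!k - xw)) * ?V (xz#xs) s'
        + (\<Sum>i<length xs. Mc g mus xw xs i * ?V (xz # xs[i := xw]) s'))" .
  have s1: "(\<Sum>i<length xs. Mc g mus xw xs i * ?V (xz # xs[i := xw]) s')
     = (\<Sum>i<length xs. Mc g mus xw xs i * ?V (xw # xs[i := xz]) s')"
  proof (rule sum.cong[OF refl])
    fix i assume "i \<in> {..<length xs}"
    then have "Bprod g mus (xz # xs[i := xw]) = Bprod g mus (xw # xs[i := xz])"
      by (intro Bprod_perm count_upd) simp
    then show "Mc g mus xw xs i * ?V (xz # xs[i := xw]) s' = Mc g mus xw xs i * ?V (xw # xs[i := xz]) s'" by simp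
  qed
  have s2: "(\<Sum>i<length xs. Mc g mus xz (xw#xs) (Suc i) * ?V (xw # xs[i := xz]) s')
     = fw g (xw - xz) * (\<Sum>i<length xs. Mc g mus xz xs i * ?V (xw # xs[i := xz]) s')
       - hw g (xw - xz) * (\<Sum>i<length xs. Mc g mus xw xs i * ?V (xw # xs[i := xz]) s')"
    (is "?L = _")
  proof -
    have "?L = (\<Sum>i<length xs. (fw g (xw - xz) * Mc g mus xz xs i - hw g (xw - xz) * Mc g mus xw xs i) * ?V (xw # xs[i := xz]) s')"
      by (rule sum.cong[OF refl]) (simp add: Mc_Suc w10 g1 g1')
    then show ?thesis by (simp add: sum_distrib_left sum_subtractf algebra_simps)
  qed
  have p: "(\<Prod>k<length (xw#xs). fw g ((xw#xs)!k - xz)) = fw g (xw - xz) * (\<Prod>k<length xs. fw g (xs!k - xz))"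
    by (simp only: length_Cons prod.lessThan_Suc_shift) simp
  have q: "(\<Sum>i<length (xw#xs). Mc g mus xz (xw#xs) i * ?V ((xw#xs)[i := xz]) s')
     = Mc g mus xz (xw#xs) 0 * ?V (xz#xs) s' + (\<Sum>i<length xs. Mc g mus xz (xw#xs) (Suc i) * ?V (xw # xs[i := xz]) s')"
    by (simp only: length_Cons sum.lessThan_Suc_shift) simp
  show ?case unfolding p q L s1 s2 Mc_0
    by (simp add: algebra_simps del: Bprod.simps)
qed



lemma pl_upt: "prod_list (map h [Suc 0..<Suc L]) = (\<Prod>k=1..L. h k)"
  by (induction L) simp_all

lemma prod_skip:
  assumes "i < L"
  shows "(\<Prod>k<L. if k = i then 1 else H (Suc k)) = (\<Prod>k\<in>{0..L} - {Suc i, 0}. (H k :: complex))"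
proof -
  have "(\<Prod>k<L. if k = i then 1 else H (Suc k)) = (\<Prod>k\<in>{..<L} - {i}. if k = i then 1 else H (Suc k))"
    using assms by (subst prod.remove[of _ i]) auto
  also have "\<dots> = (\<Prod>k\<in>{..<L} - {i}. H (Suc k))" by (rule prod.cong) auto
  also have "\<dots> = (\<Prod>k\<in>Suc ` ({..<L} - {i}). H k)" by (subst prod.reindex) auto
  also have "Suc ` ({..<L} - {i}) = {0..L} - {Suc i, 0}"
  proof
    show "Suc ` ({..<L} - {i}) \<subseteq> {0..L} - {Suc i, 0}" by auto
    show "{0..L} - {Suc i, 0} \<subseteq> Suc ` ({..<L} - {i})"
    proof
      fix k assume k: "k \<in> {0..L} - {Suc i, 0}"
      then obtain j where "k = Suc j" by (cases k) auto
      with k show "k \<in> Suc ` ({..<L} - {i})" by auto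
    qed
  qed
  finally show ?thesis .
qed

lemma E0:
  fixes g :: complex and L :: nat and mu x :: "nat \<Rightarrow> complex"
  assumes gen: "\<And>j k. j \<le> L \<Longrightarrow> k \<le> L \<Longrightarrow> j \<noteq> k \<Longrightarrow> wb (x j - x k) \<noteq> 0"
  shows "(\<Sum>i=0..L. sigma g L mu x 0 i * ZX g L mu x i) = 0"
proof -
  define mus where "mus = map mu [1..<L+1]"
  define xs where "xs = map x [1..<L+1]"
  define T where "T = replicate L True"
  define zz where "zz = replicate L False"
  have lm: "length mus = L" and lx: "length xs = L" unfolding mus_def xs_def by simp_all
  have nx: "xs!k = x (Suc k)" if "k < L" for k using that unfolding xs_def by (simp add: nth_map nth_upt del: upt_Suc)
  have g1: "wb (xs!i - x 0) \<noteq> 0" if "i < length xs" for i using that gen[of "Suc i" 0] by (simp add: lx nx)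
  have g2: "wb (xs!i - xs!j) \<noteq> 0" if "i < length xs" "j < length xs" "i \<noteq> j" for i j
    using that gen[of "Suc i" "Suc j"] by (simp add: lx nx)
  note AT = A_through[where mus=mus and xs=xs and xz="x 0" and s'=T and g=g, OF g1 g2]
  have TS: "T \<in> states (length mus)" unfolding T_def states_def lm by simp
  have lhs: "(\<Sum>u\<in>states (length mus). Aop g mus (x 0) T u * Bprod g mus xs u (replicate (length mus) False))
     = prod_list (map (\<lambda>m. wb (x 0 - m)) mus) * Bprod g mus xs T zz"
    unfolding Aop_def using A_dvac[where g=g and x="x 0" and ms=mus] TS
    by (simp add: lm T_def zz_def if_distrib[of "\<lambda>v. v * _"] sum.delta finite_states cong: if_cong)
  have C1: "prod_list (map (\<lambda>m. wb (x 0 - m)) mus) = (\<Prod>k=1..L. wb (x 0 - mu k))"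
    unfolding mus_def using pl_upt[of "\<lambda>k. wb (x 0 - mu k)" L] by (simp add: comp_def del: upt_Suc)
  have C2: "Lam g mus y = (\<Prod>k=1..L. wa g (y - mu k))" for y
    unfolding Lam_def mus_def using pl_upt[of "\<lambda>k. wa g (y - mu k)" L] by (simp add: comp_def del: upt_Suc)
  have C3: "(\<Prod>k<length xs. fw g (xs!k - x 0)) = (\<Prod>k\<in>{0..L} - {0}. wa g (x k - x 0) / wb (x k - x 0))"
  proof -
    have "{0..L} - {0} = {Suc 0..L}" by auto
    then show ?thesis by (simp add: prod.atLeast1_atMost_eq lx nx fw_def)
  qed
  have C4: "- Mc g mus (x 0) xs i = sigma g L mu x 0 (Suc i)" if "i < L" for i
  proof -
    have "(\<Prod>k<length xs. if k = i then 1 else fw g (xs!k - xs!i))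
        = (\<Prod>k<L. if k = i then 1 else fw g (x (Suc k) - x (Suc i)))"
      using that by (intro prod.cong) (simp_all add: lx nx)
    also have "\<dots> = (\<Prod>k\<in>{0..L} - {Suc i, 0}. wa g (x k - x (Suc i)) / wb (x k - x (Suc i)))"
      unfolding fw_def by (rule prod_skip[OF that, where H="\<lambda>k. wa g (x k - x (Suc i)) / wb (x k - x (Suc i))"])
    finally show ?thesis
      unfolding Mc_def sigma_def using that by (simp add: nx C2 hw_def)
  qed
  have C5: "ZX g L mu x (Suc i) = Bprod g mus (xs[i := x 0]) T zz" if "i < L" for i
  proof -
    have "map (\<lambda>k. if k = Suc i then x 0 else x k) [1..<L+1] = xs[i := x 0]"
      by (rule nth_equalityI) (auto simp: lx nx nth_list_update nth_upt simp del: upt_Suc)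
    then show ?thesis unfolding ZX_def Zpf_def mus_def T_def zz_def by simp
  qed
  have C6: "ZX g L mu x 0 = Bprod g mus xs T zz"
  proof -
    have "map (\<lambda>k. if k = 0 then x 0 else x k) [1..<L+1] = xs" unfolding xs_def by simp
    then show ?thesis unfolding ZX_def Zpf_def mus_def T_def zz_def by simp
  qed
  have s0: "sigma g L mu x 0 0 = (\<Prod>k=1..L. wb (x 0 - mu k)) - (\<Prod>k=1..L. wa g (x 0 - mu k)) * (\<Prod>k\<in>{0..L} - {0}. wa g (x k - x 0) / wb (x k - x 0))"
    unfolding sigma_def by simp
  have eq: "(\<Prod>k=1..L. wb (x 0 - mu k)) * Bprod g mus xs T zz =
     (\<Prod>k=1..L. wa g (x 0 - mu k)) * (\<Prod>k\<in>{0..L} - {0}. wa g (x k - x 0) / wb (x k - x 0)) * Bprod g mus xs T zz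
     + (\<Sum>i<L. - sigma g L mu x 0 (Suc i) * ZX g L mu x (Suc i))"
  proof -
    have "(\<Sum>i<length xs. Mc g mus (x 0) xs i * Bprod g mus (xs[i := x 0]) T zz)
       = (\<Sum>i<L. - sigma g L mu x 0 (Suc i) * ZX g L mu x (Suc i))"
      by (rule sum.cong) (simp_all add: lx C5 C4[symmetric])
    then show ?thesis using AT lhs C1 C2 C3 by (simp add: lm zz_def)
  qed
  have "(\<Sum>i=0..L. sigma g L mu x 0 i * ZX g L mu x i)
     = sigma g L mu x 0 0 * ZX g L mu x 0 + (\<Sum>i<L. sigma g L mu x 0 (Suc i) * ZX g L mu x (Suc i))"
  proof -
    have "{0..L} = insert 0 {Suc 0..L}" by auto
    then show ?thesis by (simp add: prod.atLeast1_atMost_eq sum.atLeast1_atMost_eq)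
  qed
  also have "\<dots> = 0" unfolding s0 C6 using eq by (simp add: algebra_simps sum_negf)
  finally show ?thesis .
qed



lemma count_map_upt: "count_list (map h [a..<b]) z = card {k\<in>{a..<b}. z = h k}"
proof -
  have "count_list (map h [a..<b]) z = length (filter (\<lambda>k. z = h k) [a..<b])"
    by (simp add: count_list_eq_length_filter filter_map comp_def)
  also have "\<dots> = card (set (filter (\<lambda>k. z = h k) [a..<b]))"
    by (rule distinct_card[symmetric]) simp
  also have "set (filter (\<lambda>k. z = h k) [a..<b]) = {k\<in>{a..<b}. z = h k}" by auto
  finally show ?thesis .
qed

lemma count_perm:
  assumes "inj s" "s ` {a..<b} = {a..<b}"
  shows "count_list (map (f \<circ> s) [a..<b]) z = count_list (map f [a..<b]) z"
proof -
  have "s ` {k\<in>{a..<b}. z = f (s k)} = {k\<in>{a..<b}. z = f k}"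
  proof
    show "s ` {k\<in>{a..<b}. z = f (s k)} \<subseteq> {k\<in>{a..<b}. z = f k}"
    proof
      fix y assume "y \<in> s ` {k\<in>{a..<b}. z = f (s k)}"
      then obtain k where k: "k \<in> {a..<b}" "z = f (s k)" "y = s k" by blast
      have "s k \<in> s ` {a..<b}" using k(1) by (rule imageI)
      then show "y \<in> {k\<in>{a..<b}. z = f k}" using k assms(2) by simp
    qed
    show "{k\<in>{a..<b}. z = f k} \<subseteq> s ` {k\<in>{a..<b}. z = f (s k)}"
    proof
      fix y assume y: "y \<in> {k\<in>{a..<b}. z = f k}"
      then have "y \<in> s ` {a..<b}" using assms(2) by simp
      then obtain j where j: "j \<in> {a..<b}" "y = s j" by blast
      then show "y \<in> s ` {k\<in>{a..<b}. z = f (s k)}" using y by blast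
    qed
  qed
  moreover have "inj_on s {k\<in>{a..<b}. z = f (s k)}" using assms(1) by (simp add: inj_on_def inj_def)
  ultimately have "card {k\<in>{a..<b}. z = f (s k)} = card {k\<in>{a..<b}. z = f k}"
    using card_image[of s "{k\<in>{a..<b}. z = f (s k)}"] by simp
  then show ?thesis by (simp add: count_map_upt)
qed

lemma Zpf_perm:
  assumes "inj s" "s ` {1..<L+1} = {1..<L+1}"
    and "\<And>k. k \<in> {1..<L+1} \<Longrightarrow> f1 k = f2 (s k)"
  shows "Zpf g L mu (map f1 [1..<L+1]) = Zpf g L mu (map f2 [1..<L+1])"
proof -
  have e: "map f1 [1..<L+1] = map (f2 \<circ> s) [1..<L+1]"
    by (rule map_cong) (use assms(3) in auto)
  have c: "count_list (map f1 [1..<L+1]) z = count_list (map f2 [1..<L+1]) z" for z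
    unfolding e by (rule count_perm[OF assms(1,2)])
  have "Bprod g (map mu [1..<L+1]) (map f1 [1..<L+1]) = Bprod g (map mu [1..<L+1]) (map f2 [1..<L+1])"
    by (rule Bprod_perm) (rule c)
  then show ?thesis unfolding Zpf_def by simp
qed

theorem corollary6p1:
  fixes g :: complex and L :: nat and mu x :: "nat \<Rightarrow> complex"
  assumes "L \<ge> 1"
    and generic: "\<And>j k. j \<le> L \<Longrightarrow> k \<le> L \<Longrightarrow> j \<noteq> k \<Longrightarrow> wb (x j - x k) \<noteq> 0"
    and "l \<le> L"
  shows "(\<Sum>i=0..L. sigma g L mu x l i * ZX g L mu x i) = 0"
proof (cases "l = 0")
  case True then show ?thesis using E0[OF generic] by simp
next
  case False
  define t where "t k = (if k = 0 then l else if k = l then 0 else k)" for k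
  define y where "y k = x (t k)" for k
  have tt: "t (t k) = k" for k using False by (simp add: t_def)
  have injt: "inj t" by (metis injI tt)
  have timg: "t ` A = {k. t k \<in> A}" for A
  proof
    show "t ` A \<subseteq> {k. t k \<in> A}" using tt by auto
    show "{k. t k \<in> A} \<subseteq> t ` A"
    proof
      fix k assume "k \<in> {k. t k \<in> A}"
      then have "t (t k) \<in> t ` A" by simp
      then show "k \<in> t ` A" using tt by simp
    qed
  qed
  have t0L: "t ` {0..L} = {0..L}" unfolding timg using assms(3) by (auto simp: t_def)
  have prodt: "(\<Prod>k\<in>S. F (t k)) = (\<Prod>k\<in>t ` S. F k)" for S and F :: "nat \<Rightarrow> complex"
    by (simp add: prod.reindex[OF inj_on_subset[OF injt]])
  have geny: "wb (y j - y k) \<noteq> 0" if "j \<le> L" "k \<le> L" "j \<noteq> k" for j k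
  proof -
    have "t j \<le> L" "t k \<le> L" using that assms(3) by (auto simp: t_def)
    moreover have "t j \<noteq> t k" using that injt by (metis tt)
    ultimately show ?thesis unfolding y_def by (rule generic)
  qed
  have E: "(\<Sum>i=0..L. sigma g L mu y 0 i * ZX g L mu y i) = 0" by (rule E0) (rule geny)
  have yl: "y l = x 0" and y0: "y 0 = x l" and yk: "\<And>k. k \<noteq> 0 \<Longrightarrow> k \<noteq> l \<Longrightarrow> y k = x k"
    unfolding y_def t_def by auto
  have trm: "sigma g L mu y 0 (t i) * ZX g L mu y (t i) = sigma g L mu x l i * ZX g L mu x i"
    if i: "i \<in> {0..L}" for i
  proof -
    consider "i = 0" | "i = l" | "i \<noteq> 0" "i \<noteq> l" by blast
    then show ?thesis
    proof cases
      case 1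
      have ti: "t i = l" using 1 by (simp add: t_def)
      have S: "{0..L} - {l, 0} = {Suc 0..L} - {l}" by auto
      have P: "(\<Prod>k\<in>{Suc 0..L} - {l}. wa g (y k - x 0) / wb (y k - x 0)) = (\<Prod>k\<in>{Suc 0..L} - {l}. wa g (x k - x 0) / wb (x k - x 0))"
        by (rule prod.cong) (auto simp: yk)
      have sg: "sigma g L mu y 0 l = sigma g L mu x l 0"
        unfolding sigma_def using False by (simp add: yl y0 S P)
      have "map (\<lambda>k. if k = l then y 0 else y k) [1..<L+1] = map (\<lambda>k. if k = 0 then x 0 else x k) [1..<L+1]"
        by (rule map_cong) (auto simp: y0 yk)
      then have z: "ZX g L mu y l = ZX g L mu x 0" unfolding ZX_def by (rule arg_cong[where f="Zpf g L mu"])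
      show ?thesis using ti 1 sg z by simp
    next
      case 2
      have ti: "t i = 0" using 2 by (simp add: t_def)
      have I: "t ` ({0..L} - {0}) = {0..L} - {l}" unfolding timg using assms(3) False by (auto simp: t_def)
      have P: "(\<Prod>k\<in>{0..L} - {0}. wa g (y k - x l) / wb (y k - x l)) = (\<Prod>k\<in>{0..L} - {l}. wa g (x k - x l) / wb (x k - x l))"
        unfolding y_def prodt[where F="\<lambda>k. wa g (x k - x l) / wb (x k - x l)"] I ..
      have sg: "sigma g L mu y 0 0 = sigma g L mu x l l"
        unfolding sigma_def using False by (simp add: y0 P)
      have "map (\<lambda>k. if k = 0 then y 0 else y k) [1..<L+1] = map (\<lambda>k. if k = l then x 0 else x k) [1..<L+1]"
        by (rule map_cong) (auto simp: yl yk)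
      then have z: "ZX g L mu y 0 = ZX g L mu x l" unfolding ZX_def by (rule arg_cong[where f="Zpf g L mu"])
      show ?thesis using ti 2 sg z by simp
    next
      case 3
      have ti: "t i = i" using 3 by (simp add: t_def)
      have yi: "y i = x i" using 3 by (simp add: yk)
      have I: "t ` ({0..L} - {i, 0}) = {0..L} - {i, l}" unfolding timg using assms(3) False 3 by (auto simp: t_def)
      have P: "(\<Prod>k\<in>{0..L} - {i, 0}. wa g (y k - x i) / wb (y k - x i)) = (\<Prod>k\<in>{0..L} - {i, l}. wa g (x k - x i) / wb (x k - x i))"
        unfolding y_def prodt[where F="\<lambda>k. wa g (x k - x i) / wb (x k - x i)"] I ..
      have sg: "sigma g L mu y 0 i = sigma g L mu x l i"
        unfolding sigma_def using False 3 by (simp add: y0 yi P)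
      define s where "s k = (if k = i then l else if k = l then i else k)" for k
      have ss: "s (s k) = k" for k by (simp add: s_def)
      have injs: "inj s" by (metis injI ss)
      have simg: "s ` {1..<L+1} = {1..<L+1}"
      proof
        show "s ` {1..<L+1} \<subseteq> {1..<L+1}" using i 3 False assms(3) by (auto simp: s_def)
        show "{1..<L+1} \<subseteq> s ` {1..<L+1}"
        proof
          fix k assume k: "k \<in> {1..<L+1}"
          have "s k \<in> {1..<L+1}" using k i 3 False assms(3) by (auto simp: s_def)
          then have "s (s k) \<in> s ` {1..<L+1}" by (rule imageI)
          then show "k \<in> s ` {1..<L+1}" using ss by simp
        qed
      qed
      have z: "ZX g L mu y i = ZX g L mu x i"
        unfolding ZX_def
        by (rule Zpf_perm[OF injs simg]) (use 3 in \<open>auto simp: s_def y0 yk yl\<close>)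
      show ?thesis using ti sg z by simp
    qed
  qed
  have "(\<Sum>i=0..L. sigma g L mu y 0 i * ZX g L mu y i) = (\<Sum>i\<in>t ` {0..L}. sigma g L mu y 0 i * ZX g L mu y i)"
    unfolding t0L ..
  also have "\<dots> = (\<Sum>i=0..L. sigma g L mu y 0 (t i) * ZX g L mu y (t i))"
    by (simp add: sum.reindex[OF inj_on_subset[OF injt]])
  also have "\<dots> = (\<Sum>i=0..L. sigma g L mu x l i * ZX g L mu x i)"
    by (rule sum.cong[OF refl]) (rule trm)
  finally show ?thesis using E by simp
qed


end
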